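(* Let $(X,T)$ be a CAM $G$-system and let $(Y,S)$ be a topological factor of $(X,T)$, i.e. there is a continuous surjection $\pi\colon X\to Y$ with $\pi\circ T_g=S_g\circ\pi$ for all $g\in G$. If the action $S$ of $G$ on $Y$ is faithful, then $(Y,S)$ is CAM. In particular, if $G=\mathbb{Z}$ and $Y$ is infinite, then $(Y,S)$ is a CAM $\mathbb{Z}$-system.
   Context: Let $G$ be a countable discrete group. A topological $G$-system $(X,T)$ consists of a compact metric space $X$ and an action $T\colon G\to\mathrm{Homeo}(X)$, $g\mapsto T_g$. The system is topologically transitive if for all nonempty open $U,V\subseteq X$ there is $g\in G$ with $T_gU\cap V\neq\emptyset$; the action is faithful if $T_g=\mathrm{id}_X$ only when $g$ is the identity. A point is periodic if its $G$-orbit is finite. The system is chaotic almost minimal (CAM) if: (1) it is topologically transitive and the action is faithful; (2) the periodic points are dense in $X$; (3) every proper closed $T$-invariant subset of $X$ is finite. *)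

theory Defs
  imports "HOL-Analysis.Analysis" "HOL-Library.Countable"
begin

definition top_system :: "'a::metric_space set \<Rightarrow> ('g::group_add \<Rightarrow> 'a \<Rightarrow> 'a) \<Rightarrow> bool" where
  "top_system X T \<longleftrightarrow> compact X \<and>
     (\<forall>g. T g ` X \<subseteq> X \<and> continuous_on X (T g)) \<and>
     (\<forall>x\<in>X. T 0 x = x) \<and>
     (\<forall>g h. \<forall>x\<in>X. T (g + h) x = T g (T h x))"

definition top_transitive :: "'a::topological_space set \<Rightarrow> ('g \<Rightarrow> 'a \<Rightarrow> 'a) \<Rightarrow> bool" where
  "top_transitive X T \<longleftrightarrow>
     (\<forall>U V. openin (top_of_set X) U \<and> U \<noteq> {} \<and> openin (top_of_set X) V \<and> V \<noteq> {}
        \<longrightarrow> (\<exists>g. T g ` U \<inter> V \<noteq> {}))"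

definition faithful_action :: "'a set \<Rightarrow> ('g::zero \<Rightarrow> 'a \<Rightarrow> 'a) \<Rightarrow> bool" where
  "faithful_action X T \<longleftrightarrow> (\<forall>g. (\<forall>x\<in>X. T g x = x) \<longrightarrow> g = 0)"

definition periodic_points :: "'a set \<Rightarrow> ('g \<Rightarrow> 'a \<Rightarrow> 'a) \<Rightarrow> 'a set" where
  "periodic_points X T = {x\<in>X. finite (range (\<lambda>g. T g x))}"

definition T_invariant :: "'a set \<Rightarrow> ('g \<Rightarrow> 'a \<Rightarrow> 'a) \<Rightarrow> 'a set \<Rightarrow> bool" where
  "T_invariant X T A \<longleftrightarrow> A \<subseteq> X \<and> (\<forall>g. T g ` A \<subseteq> A)"

definition CAM :: "'a::metric_space set \<Rightarrow> ('g::group_add \<Rightarrow> 'a \<Rightarrow> 'a) \<Rightarrow> bool" where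
  "CAM X T \<longleftrightarrow> top_system X T \<and> top_transitive X T \<and> faithful_action X T \<and>
     X \<subseteq> closure (periodic_points X T) \<and>
     (\<forall>A. closedin (top_of_set X) A \<and> T_invariant X T A \<and> A \<noteq> X \<longrightarrow> finite A)"

definition factor_map :: "'a::topological_space set \<Rightarrow> ('g \<Rightarrow> 'a \<Rightarrow> 'a) \<Rightarrow>
    'b::topological_space set \<Rightarrow> ('g \<Rightarrow> 'b \<Rightarrow> 'b) \<Rightarrow> ('a \<Rightarrow> 'b) \<Rightarrow> bool" where
  "factor_map X T Y S \<pi> \<longleftrightarrow> continuous_on X \<pi> \<and> \<pi> ` X = Y \<and>
     (\<forall>g. \<forall>x\<in>X. \<pi> (T g x) = S g (\<pi> x))"

end

theory Submission
  imports Defs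
begin

lemma core:
  fixes X :: "'a::metric_space set" and Y :: "'b::metric_space set"
    and T :: "'g::group_add \<Rightarrow> 'a \<Rightarrow> 'a" and S :: "'g \<Rightarrow> 'b \<Rightarrow> 'b"
  assumes cam: "CAM X T" and fm: "factor_map X T Y S \<pi>"
  shows "top_transitive Y S" "Y \<subseteq> closure (periodic_points Y S)"
    "\<forall>A. closedin (top_of_set Y) A \<and> T_invariant Y S A \<and> A \<noteq> Y \<longrightarrow> finite A"
proof -
  have cont: "continuous_on X \<pi>" and surj: "\<pi> ` X = Y"
    and comm: "\<And>g x. x \<in> X \<Longrightarrow> \<pi> (T g x) = S g (\<pi> x)"
    using fm by (auto simp: factor_map_def)
  have ts: "top_system X T" and tr: "top_transitive X T"
    and dense: "X \<subseteq> closure (periodic_points X T)"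
    and fin: "\<And>A. closedin (top_of_set X) A \<Longrightarrow> T_invariant X T A \<Longrightarrow> A \<noteq> X \<Longrightarrow> finite A"
    using cam by (auto simp: CAM_def)
  have cX: "compact X" and TX: "\<And>g. T g ` X \<subseteq> X" using ts by (auto simp: top_system_def)
  have cY: "compact Y" using compact_continuous_image[OF cont cX] surj by simp
  have pim: "\<pi> \<in> X \<rightarrow> Y" using surj by auto
  show "top_transitive Y S"
    unfolding top_transitive_def
  proof (intro allI impI)
    fix U V assume h: "openin (top_of_set Y) U \<and> U \<noteq> {} \<and> openin (top_of_set Y) V \<and> V \<noteq> {}"
    have U1: "openin (top_of_set X) (X \<inter> \<pi> -` U)"
      using continuous_openin_preimage[OF cont pim] h by blast
    have "U \<subseteq> Y" using h openin_imp_subset by blast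
    then have U2: "X \<inter> \<pi> -` U \<noteq> {}"
    proof -
      assume sub: "U \<subseteq> Y"
      obtain v where v: "v \<in> U" using h by blast
      then have "v \<in> \<pi> ` X" using sub surj by blast
      then obtain x where "x \<in> X" "\<pi> x = v" by blast
      then show ?thesis using v by blast
    qed
    note U = U1 U2
    have V1: "openin (top_of_set X) (X \<inter> \<pi> -` V)"
      using continuous_openin_preimage[OF cont pim] h by blast
    have "V \<subseteq> Y" using h openin_imp_subset by blast
    then have V2: "X \<inter> \<pi> -` V \<noteq> {}"
    proof -
      assume sub: "V \<subseteq> Y"
      obtain v where v: "v \<in> V" using h by blast
      then have "v \<in> \<pi> ` X" using sub surj by blast
      then obtain x where "x \<in> X" "\<pi> x = v" by blast
      then show ?thesis using v by blast
    qed
    note V = V1 V2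
    obtain g where "T g ` (X \<inter> \<pi> -` U) \<inter> (X \<inter> \<pi> -` V) \<noteq> {}"
      using tr[unfolded top_transitive_def, rule_format, of "X \<inter> \<pi> -` U" "X \<inter> \<pi> -` V"] U V
      by blast
    then obtain x where "x \<in> X" "\<pi> x \<in> U" "\<pi> (T g x) \<in> V" by auto
    then have "S g (\<pi> x) \<in> S g ` U \<inter> V" using comm by auto
    then show "\<exists>g. S g ` U \<inter> V \<noteq> {}" by blast
  qed
  show "Y \<subseteq> closure (periodic_points Y S)"
  proof -
    have cl: "closure (periodic_points X T) \<subseteq> X"
      using closure_minimal[of "periodic_points X T" X] compact_imp_closed[OF cX]
      by (auto simp: periodic_points_def)
    have sub: "\<pi> ` periodic_points X T \<subseteq> periodic_points Y S"
    proof
      fix y assume "y \<in> \<pi> ` periodic_points X T"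
      then obtain x where x: "x \<in> X" "finite (range (\<lambda>g. T g x))" "y = \<pi> x"
        by (auto simp: periodic_points_def)
      have "range (\<lambda>g. S g y) = \<pi> ` range (\<lambda>g. T g x)"
        unfolding image_image using x comm by simp
      then show "y \<in> periodic_points Y S" using x surj by (auto simp: periodic_points_def)
    qed
    have "\<pi> ` closure (periodic_points X T) \<subseteq> closure (periodic_points Y S)"
      by (rule image_closure_subset) (use continuous_on_subset[OF cont cl] sub closure_subset in auto)
    then show ?thesis using surj dense by blast
  qed
  show "\<forall>A. closedin (top_of_set Y) A \<and> T_invariant Y S A \<and> A \<noteq> Y \<longrightarrow> finite A"
  proof (intro allI impI)
    fix B assume h: "closedin (top_of_set Y) B \<and> T_invariant Y S B \<and> B \<noteq> Y"
    let ?A = "X \<inter> \<pi> -` B"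
    have BY: "B \<subseteq> Y" using h closedin_imp_subset by blast
    have "closedin (top_of_set X) ?A"
      using continuous_closedin_preimage_gen[OF cont pim] h by auto
    moreover have "T_invariant X T ?A"
      using h TX comm unfolding T_invariant_def by fastforce
    moreover have "?A \<noteq> X"
    proof
      assume "?A = X"
      then have "Y \<subseteq> B" using surj by auto
      then show False using h BY by blast
    qed
    ultimately have "finite ?A" using fin by blast
    moreover have "B = \<pi> ` ?A" using BY surj by auto
    ultimately show "finite B" by (metis finite_imageI)
  qed
qed

lemma per_reduce:
  fixes S :: "int \<Rightarrow> 'b::metric_space \<Rightarrow> 'b"
  assumes ts: "top_system Y S" and p: "\<forall>x\<in>Y. S p x = x"
  shows "\<forall>x\<in>Y. S (m * p) x = x"
proof -
  have add: "\<And>g h x. x \<in> Y \<Longrightarrow> S (g + h) x = S g (S h x)" and z: "\<And>x. x\<in>Y \<Longrightarrow> S 0 x = x"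
    using ts by (auto simp: top_system_def)
  show ?thesis
  proof (induction m rule: int_induct[where k=0])
    case base then show ?case using z by simp
  next
    case (step1 i)
    then show ?case using add p by (simp add: distrib_right)
  next
    case (step2 i)
    show ?case
    proof
      fix x assume x: "x \<in> Y"
      have "x = S ((i - 1) * p + p) x" using step2 x by (simp add: algebra_simps)
      also have "\<dots> = S ((i - 1) * p) x" using add x p by simp
      finally show "S ((i - 1) * p) x = x" by simp
    qed
  qed
qed

lemma not_trans:
  fixes Y :: "'b::metric_space set" and S :: "int \<Rightarrow> 'b \<Rightarrow> 'b"
  assumes ts: "top_system Y S" and inf: "infinite Y" and n: "n \<noteq> 0"
    and id: "\<forall>x\<in>Y. S n x = x"
  shows "\<not> top_transitive Y S"
proof
  assume tr: "top_transitive Y S"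
  have add: "\<And>g h x. x \<in> Y \<Longrightarrow> S (g + h) x = S g (S h x)" and z: "\<And>x. x\<in>Y \<Longrightarrow> S 0 x = x"
    and SY: "\<And>g. S g ` Y \<subseteq> Y" and cS: "\<And>g. continuous_on Y (S g)"
    using ts by (auto simp: top_system_def)
  define p where "p = \<bar>n\<bar>"
  have pp: "p > 0" using n by (simp add: p_def)
  have idp: "\<forall>x\<in>Y. S p x = x"
  proof (cases "n > 0")
    case True then show ?thesis using id by (simp add: p_def)
  next
    case False
    have "S (-n) x = x" if x: "x \<in> Y" for x
    proof -
      have "S (-n) x = S (-n) (S n x)" using id x by simp
      also have "\<dots> = S 0 x" using add[OF x, of "-n" n] by simp
      finally show ?thesis using z x by simp
    qed
    then show ?thesis using False by (simp add: p_def)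
  qed
  have red: "S g x = S (g mod p) x" if x: "x \<in> Y" for g x
  proof -
    have "g = g mod p + (g div p) * p" by simp
    then have "S g x = S (g mod p) (S ((g div p) * p) x)" using add[OF x] by metis
    then show ?thesis using per_reduce[OF ts idp] x by simp
  qed
  define K where "K = {0..<p}"
  have fK: "finite K" by (simp add: K_def)
  have modK: "g mod p \<in> K" for g using pp by (simp add: K_def)
  obtain y where y: "y \<in> Y" using inf by fastforce
  have "finite ((\<lambda>k. S k y) ` K)" using fK by simp
  then obtain z where zY: "z \<in> Y" and zn: "z \<notin> (\<lambda>k. S k y) ` K"
    using inf by (metis finite_subset subsetI)
  define e where "e = Min ((\<lambda>k. dist (S k y) z) ` K) / 2"
  have K0: "K \<noteq> {}" using pp by (auto simp: K_def)
  have epos: "e > 0" unfolding e_def using fK K0 zn by (auto)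
  have ele: "\<And>k. k \<in> K \<Longrightarrow> 2 * e \<le> dist (S k y) z" unfolding e_def using fK by simp
  have "\<forall>k\<in>K. \<exists>d>0. \<forall>x\<in>Y. dist x y < d \<longrightarrow> dist (S k x) (S k y) < e"
    using cS y epos unfolding continuous_on_iff by blast
  then obtain d where d: "\<And>k. k\<in>K \<Longrightarrow> d k > 0 \<and> (\<forall>x\<in>Y. dist x y < d k \<longrightarrow> dist (S k x) (S k y) < e)"
    by metis
  define \<delta> where "\<delta> = Min (d ` K)"
  have dpos: "\<delta> > 0" unfolding \<delta>_def using fK K0 d by auto
  have dle: "\<And>k. k \<in> K \<Longrightarrow> \<delta> \<le> d k" unfolding \<delta>_def using fK by simp
  let ?U = "Y \<inter> ball y \<delta>" and ?V = "Y \<inter> ball z e"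
  have "openin (top_of_set Y) ?U" "?U \<noteq> {}" "openin (top_of_set Y) ?V" "?V \<noteq> {}"
    using y zY dpos epos by (auto simp: openin_open_Int)
  then obtain g where "S g ` ?U \<inter> ?V \<noteq> {}" using tr unfolding top_transitive_def by blast
  then obtain x where x: "x \<in> Y" "dist y x < \<delta>" "dist z (S g x) < e" by auto
  define k where "k = g mod p"
  have k: "k \<in> K" using modK by (simp add: k_def)
  have "S g x = S k x" unfolding k_def by (rule red[OF x(1)])
  moreover have "dist (S k x) (S k y) < e"
  proof -
    have "dist x y < d k" using dle[OF k] x(2) by (simp add: dist_commute)
    then show ?thesis using d[OF k] x(1) by blast
  qed
  ultimately have "dist (S k y) z < 2 * e" using x(3) dist_triangle[of "S k y" z "S k x"]
    by (simp add: dist_commute)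
  then show False using ele[OF k] by simp
qed

theorem proposition2p6:
  fixes X :: "'a::metric_space set" and Y :: "'b::metric_space set"
    and T :: "'g::{group_add,countable} \<Rightarrow> 'a \<Rightarrow> 'a" and S :: "'g \<Rightarrow> 'b \<Rightarrow> 'b"
    and \<pi> :: "'a \<Rightarrow> 'b"
  shows "(CAM X T \<and> top_system Y S \<and> factor_map X T Y S \<pi> \<and> faithful_action Y S
            \<longrightarrow> CAM Y S)
       \<and> (\<forall>(T' :: int \<Rightarrow> 'a \<Rightarrow> 'a) (S' :: int \<Rightarrow> 'b \<Rightarrow> 'b).
            CAM X T' \<and> top_system Y S' \<and> factor_map X T' Y S' \<pi> \<and> infinite Y
            \<longrightarrow> CAM Y S')"
proof (intro conjI impI allI)
  assume h: "CAM X T \<and> top_system Y S \<and> factor_map X T Y S \<pi> \<and> faithful_action Y S"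
  then show "CAM Y S" using core[of X T Y S \<pi>] by (simp add: CAM_def)
next
  fix T' :: "int \<Rightarrow> 'a \<Rightarrow> 'a" and S' :: "int \<Rightarrow> 'b \<Rightarrow> 'b"
  assume h: "CAM X T' \<and> top_system Y S' \<and> factor_map X T' Y S' \<pi> \<and> infinite Y"
  have "faithful_action Y S'"
    unfolding faithful_action_def
  proof (intro allI impI)
    fix n assume "\<forall>x\<in>Y. S' n x = x"
    then show "n = 0" using not_trans[of Y S' n] h core(1)[of X T' Y S' \<pi>] by blast
  qed
  then show "CAM Y S'" using h core[of X T' Y S' \<pi>] by (simp add: CAM_def)
qed

end
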